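(* Let $k,r$ be integers with $0\le r<k$, and let $G$ be a $(k+r)$-regular graph of order $n$. Then \[c_k(G)\ge \frac{(k-r)n+(r+1)r}{2k}.\] Moreover, for $r\ge 1$, a minimum $k$-conversion set $S$ of $G$ has order $\frac{(k-r)n+(r+1)r}{2k}$ if and only if $S$ is independent and $G[V-S]$ is a maximal $r$-degenerate graph.
   Context: For a graph $G=(V,E)$, a positive integer $k$ and a set $S_0\subseteq V$, the irreversible $k$-threshold conversion process is defined by: for $t=1,2,\dots$, $S_t$ is obtained from $S_{t-1}$ by adjoining all vertices having at least $k$ neighbours in $S_{t-1}$. The set $S_0$ is a $k$-conversion set if $S_t=V$ for some $t\ge0$, and $c_k(G)$ is the minimum size of a $k$-conversion set. A graph is $r$-degenerate if every induced subgraph has a vertex of degree at most $r$. A graph $H$ is maximal $r$-degenerate if it is $r$-degenerate but for every pair of non-adjacent vertices $x,y$ of $H$, the graph $H+xy$ is not $r$-degenerate. *)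

theory Defs
  imports Complex_Main
begin

definition graph :: "'a set \<Rightarrow> ('a \<Rightarrow> 'a \<Rightarrow> bool) \<Rightarrow> bool" where
  "graph V E \<longleftrightarrow> finite V \<and> (\<forall>x y. E x y \<longrightarrow> x \<in> V \<and> y \<in> V)
     \<and> (\<forall>x y. E x y \<longrightarrow> E y x) \<and> (\<forall>x. \<not> E x x)"

definition nbrs :: "'a set \<Rightarrow> ('a \<Rightarrow> 'a \<Rightarrow> bool) \<Rightarrow> 'a \<Rightarrow> 'a set" where
  "nbrs V E v = {u \<in> V. E v u}"

definition regular :: "'a set \<Rightarrow> ('a \<Rightarrow> 'a \<Rightarrow> bool) \<Rightarrow> nat \<Rightarrow> bool" where
  "regular V E d \<longleftrightarrow> (\<forall>v \<in> V. card (nbrs V E v) = d)"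

definition conv_step :: "'a set \<Rightarrow> ('a \<Rightarrow> 'a \<Rightarrow> bool) \<Rightarrow> nat \<Rightarrow> 'a set \<Rightarrow> 'a set" where
  "conv_step V E k S = S \<union> {v \<in> V. k \<le> card {u \<in> S. E v u}}"

definition conversion_set :: "'a set \<Rightarrow> ('a \<Rightarrow> 'a \<Rightarrow> bool) \<Rightarrow> nat \<Rightarrow> 'a set \<Rightarrow> bool" where
  "conversion_set V E k S \<longleftrightarrow> S \<subseteq> V \<and> (\<exists>t. (conv_step V E k ^^ t) S = V)"

definition conv_number :: "'a set \<Rightarrow> ('a \<Rightarrow> 'a \<Rightarrow> bool) \<Rightarrow> nat \<Rightarrow> nat" where
  "conv_number V E k = Min {card S | S. conversion_set V E k S}"

definition min_conversion_set :: "'a set \<Rightarrow> ('a \<Rightarrow> 'a \<Rightarrow> bool) \<Rightarrow> nat \<Rightarrow> 'a set \<Rightarrow> bool" where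
  "min_conversion_set V E k S \<longleftrightarrow> conversion_set V E k S \<and> card S = conv_number V E k"

definition independent :: "('a \<Rightarrow> 'a \<Rightarrow> bool) \<Rightarrow> 'a set \<Rightarrow> bool" where
  "independent E S \<longleftrightarrow> (\<forall>x \<in> S. \<forall>y \<in> S. \<not> E x y)"

definition degenerate :: "'a set \<Rightarrow> ('a \<Rightarrow> 'a \<Rightarrow> bool) \<Rightarrow> nat \<Rightarrow> bool" where
  "degenerate V E r \<longleftrightarrow>
     (\<forall>W. W \<subseteq> V \<and> W \<noteq> {} \<longrightarrow> (\<exists>v \<in> W. card {u \<in> W. E v u} \<le> r))"

definition add_edge :: "('a \<Rightarrow> 'a \<Rightarrow> bool) \<Rightarrow> 'a \<Rightarrow> 'a \<Rightarrow> ('a \<Rightarrow> 'a \<Rightarrow> bool)" where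
  "add_edge E x y = (\<lambda>a b. E a b \<or> (a = x \<and> b = y) \<or> (a = y \<and> b = x))"

definition maximal_degenerate :: "'a set \<Rightarrow> ('a \<Rightarrow> 'a \<Rightarrow> bool) \<Rightarrow> nat \<Rightarrow> bool" where
  "maximal_degenerate V E r \<longleftrightarrow> degenerate V E r \<and>
     (\<forall>x \<in> V. \<forall>y \<in> V. x \<noteq> y \<and> \<not> E x y \<longrightarrow> \<not> degenerate V (add_edge E x y) r)"

definition induced :: "('a \<Rightarrow> 'a \<Rightarrow> bool) \<Rightarrow> 'a set \<Rightarrow> ('a \<Rightarrow> 'a \<Rightarrow> bool)" where
  "induced E W = (\<lambda>a b. E a b \<and> a \<in> W \<and> b \<in> W)"

end

theory Submission imports Defs begin

definition cnt :: "('a \<Rightarrow> 'a \<Rightarrow> bool) \<Rightarrow> 'a set \<Rightarrow> nat" where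
  "cnt F X = (\<Sum>a\<in>X. card {b\<in>X. F a b})"

fun gsum :: "nat \<Rightarrow> nat \<Rightarrow> nat" where
  "gsum r 0 = 0"
| "gsum r (Suc n) = gsum r n + min r n"

lemma gsum_small: "n \<le> r \<Longrightarrow> 2 * gsum r n + n = n * n"
  by (induction n) (auto simp: min_def)

lemma gsum_large: "r \<le> n \<Longrightarrow> 2 * gsum r n + r * (r + 1) = 2 * r * n"
proof (induction n)
  case 0 then show ?case by simp
next
  case (Suc n)
  show ?case
  proof (cases "r \<le> n")
    case True then show ?thesis using Suc by (simp add: min_def algebra_simps)
  next
    case False
    then have "r = Suc n" using Suc by simp
    with gsum_small[of n r] show ?thesis by (simp add: min_def algebra_simps)
  qed
qed

lemma card_filter_sum: "finite A \<Longrightarrow> card {x\<in>A. P x} = (\<Sum>x\<in>A. if P x then 1 else 0)"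
  by (simp add: sum.inter_filter[symmetric])

lemma cross_sym:
  assumes "finite A" "finite B" "\<And>a b. F a b \<Longrightarrow> F b a"
  shows "(\<Sum>a\<in>A. card {b\<in>B. F a b}) = (\<Sum>b\<in>B. card {a\<in>A. F b a})"
proof -
  have "(\<Sum>a\<in>A. card {b\<in>B. F a b}) = (\<Sum>a\<in>A. \<Sum>b\<in>B. if F a b then 1 else 0)"
    using assms by (simp add: card_filter_sum)
  also have "\<dots> = (\<Sum>b\<in>B. \<Sum>a\<in>A. if F a b then 1 else 0)" by (rule sum.swap)
  also have "\<dots> = (\<Sum>b\<in>B. \<Sum>a\<in>A. if F b a then 1 else 0)"
    using assms(3) by (intro sum.cong refl) (metis)
  also have "\<dots> = (\<Sum>b\<in>B. card {a\<in>A. F b a})"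
    using assms by (simp add: card_filter_sum)
  finally show ?thesis .
qed

lemma cnt_remove:
  assumes "finite X" "v \<in> X" "\<And>a b. F a b \<Longrightarrow> F b a" "\<not> F v v"
  shows "cnt F X = cnt F (X - {v}) + 2 * card {u\<in>X. F v u}"
proof -
  have "cnt F X = card {b\<in>X. F v b} + (\<Sum>a\<in>X-{v}. card {b\<in>X. F a b})"
    unfolding cnt_def using assms(1,2) by (simp add: sum.remove)
  also have "(\<Sum>a\<in>X-{v}. card {b\<in>X. F a b})
      = (\<Sum>a\<in>X-{v}. card {b\<in>X-{v}. F a b} + (if F a v then 1 else 0))"
  proof (intro sum.cong refl)
    fix a assume a: "a \<in> X - {v}"
    show "card {b\<in>X. F a b} = card {b\<in>X-{v}. F a b} + (if F a v then 1 else 0)"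
    proof (cases "F a v")
      case True
      then have "{b\<in>X. F a b} = insert v {b\<in>X-{v}. F a b}" using assms(2) by auto
      then show ?thesis using True assms(1) by simp
    next
      case False
      then have "{b\<in>X. F a b} = {b\<in>X-{v}. F a b}" by auto
      then show ?thesis using False by simp
    qed
  qed
  also have "\<dots> = cnt F (X - {v}) + (\<Sum>a\<in>X-{v}. if F a v then 1 else 0)"
    unfolding cnt_def by (simp add: sum.distrib)
  also have "(\<Sum>a\<in>X-{v}. if F a v then 1 else 0) = card {a\<in>X-{v}. F a v}"
    using card_filter_sum[OF finite_Diff[OF assms(1)], of "{v}" "\<lambda>a. F a v"] by (rule sym)
  also have "{a\<in>X-{v}. F a v} = {u\<in>X. F v u}"
    using assms(3,4) by blast
  finally show ?thesis by simp
qed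

lemma degenerate_subset: "degenerate X F r \<Longrightarrow> Y \<subseteq> X \<Longrightarrow> degenerate Y F r"
  unfolding degenerate_def by blast

lemma deg_bound:
  assumes "finite X" "degenerate X F r" "\<And>a b. F a b \<Longrightarrow> F b a" "\<And>a. \<not> F a a"
  shows "cnt F X \<le> 2 * gsum r (card X)"
  using assms
proof (induction "card X" arbitrary: X)
  case 0
  then show ?case by (simp add: cnt_def)
next
  case (Suc n)
  then have ne: "X \<noteq> {}" by auto
  then obtain v where v: "v \<in> X" "card {u\<in>X. F v u} \<le> r"
    using Suc.prems(2) unfolding degenerate_def by blast
  have cX: "card (X - {v}) = n" using Suc.hyps(2) v(1) Suc.prems(1) by simp
  have "{u\<in>X. F v u} \<subseteq> X - {v}" using Suc.prems(4) by auto
  then have "card {u\<in>X. F v u} \<le> n" using cX card_mono Suc.prems(1) by (metis finite_Diff)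
  moreover have "cnt F (X - {v}) \<le> 2 * gsum r n"
    using Suc.hyps(1)[of "X - {v}"] cX Suc.prems degenerate_subset[of X F r "X - {v}"] by auto
  moreover have "cnt F X = cnt F (X - {v}) + 2 * card {u\<in>X. F v u}"
    using cnt_remove[of X v F] Suc.prems v by auto
  ultimately show ?case using v(2) by (simp add: Suc.hyps(2)[symmetric])
qed

lemma maxdeg_exact:
  assumes "finite X" "maximal_degenerate X F r" "\<And>a b. F a b \<Longrightarrow> F b a" "\<And>a. \<not> F a a"
  shows "cnt F X = 2 * gsum r (card X)"
  using assms
proof (induction "card X" arbitrary: X)
  case 0
  then show ?case by (simp add: cnt_def)
next
  case (Suc n)
  then have ne: "X \<noteq> {}" by auto
  have dX: "degenerate X F r" using Suc.prems(2) unfolding maximal_degenerate_def by blast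
  have mx: "\<forall>x\<in>X. \<forall>y\<in>X. x \<noteq> y \<and> \<not> F x y \<longrightarrow> \<not> degenerate X (add_edge F x y) r"
    using Suc.prems(2) unfolding maximal_degenerate_def by blast
  obtain v where v: "v \<in> X" "card {u\<in>X. F v u} \<le> r"
    using dX ne unfolding degenerate_def by blast
  have cX: "card (X - {v}) = n" using Suc.hyps(2) v(1) Suc.prems(1) by simp
  have sub: "{u\<in>X. F v u} \<subseteq> X - {v}" using Suc.prems(4) by auto
  then have le_n: "card {u\<in>X. F v u} \<le> n" using cX card_mono Suc.prems(1) by (metis finite_Diff)
  have exact: "card {u\<in>X. F v u} = min r n"
  proof (rule ccontr)
    assume "card {u\<in>X. F v u} \<noteq> min r n"
    then have lt: "card {u\<in>X. F v u} < r \<and> card {u\<in>X. F v u} < n"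
    proof (cases "r \<le> n")
      case True
      then have "min r n = r" by (rule min_absorb1)
      then show ?thesis using True le_n v(2) \<open>card {u\<in>X. F v u} \<noteq> min r n\<close> by simp
    next
      case False
      then have "min r n = n" by (simp add: min_absorb2)
      then show ?thesis using False le_n v(2) \<open>card {u\<in>X. F v u} \<noteq> min r n\<close> by simp
    qed
    then have "card {u\<in>X. F v u} < card (X - {v})" using cX by simp
    then have "{u\<in>X. F v u} \<noteq> X - {v}" by (metis less_irrefl)
    then obtain u where u: "u \<in> X" "u \<noteq> v" "\<not> F v u" using sub by blast
    have "degenerate X (add_edge F v u) r"
      unfolding degenerate_def
    proof (intro allI impI)
      fix Y assume Y: "Y \<subseteq> X \<and> Y \<noteq> {}"
      show "\<exists>w\<in>Y. card {x \<in> Y. add_edge F v u w x} \<le> r"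
      proof (cases "v \<in> Y")
        case True
        have "{x \<in> Y. add_edge F v u v x} \<subseteq> insert u {x\<in>X. F v x}"
          using Y u(2) by (auto simp: add_edge_def)
        then have "card {x \<in> Y. add_edge F v u v x} \<le> card (insert u {x\<in>X. F v x})"
          using Suc.prems(1) by (intro card_mono) auto
        also have "\<dots> \<le> Suc (card {x\<in>X. F v x})" by (simp add: card_insert_if Suc.prems(1))
        finally have "card {x \<in> Y. add_edge F v u v x} \<le> r" using lt by simp
        then show ?thesis using True by blast
      next
        case False
        obtain w where w: "w \<in> Y" "card {x\<in>Y. F w x} \<le> r"
          using dX Y unfolding degenerate_def by blast
        have "{x \<in> Y. add_edge F v u w x} = {x\<in>Y. F w x}"
          using False w(1) unfolding add_edge_def by auto
        then show ?thesis using w by (metis (no_types, lifting))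
      qed
    qed
    moreover have "\<not> degenerate X (add_edge F v u) r"
      using mx[rule_format, OF v(1) u(1)] u(2,3) by blast
    ultimately show False by blast
  qed
  have "maximal_degenerate (X - {v}) F r"
    unfolding maximal_degenerate_def
  proof (intro conjI ballI impI)
    show "degenerate (X - {v}) F r" using dX degenerate_subset by blast
  next
    fix x y assume xy: "x \<in> X - {v}" "y \<in> X - {v}" "x \<noteq> y \<and> \<not> F x y"
    then have "\<not> degenerate X (add_edge F x y) r"
      using mx by blast
    then obtain Y where Y: "Y \<subseteq> X" "Y \<noteq> {}"
      "\<forall>w\<in>Y. card {z\<in>Y. add_edge F x y w z} > r"
      unfolding degenerate_def by (auto simp: not_le)
    have "v \<notin> Y"
    proof
      assume vY: "v \<in> Y"
      have "{z\<in>Y. add_edge F x y v z} \<subseteq> {u\<in>X. F v u}"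
        using Y(1) xy unfolding add_edge_def by auto
      then have "card {z\<in>Y. add_edge F x y v z} \<le> card {u\<in>X. F v u}"
        using Suc.prems(1) by (intro card_mono) auto
      then show False using Y(3) vY v(2) by fastforce
    qed
    then have "Y \<subseteq> X - {v}" using Y(1) by blast
    then show "\<not> degenerate (X - {v}) (add_edge F x y) r"
      using Y(2,3) unfolding degenerate_def by (meson not_le)
  qed
  then have "cnt F (X - {v}) = 2 * gsum r n"
    using Suc.hyps(1)[of "X - {v}"] cX Suc.prems by auto
  moreover have "cnt F X = cnt F (X - {v}) + 2 * card {u\<in>X. F v u}"
    using cnt_remove[of X v F] Suc.prems v by auto
  ultimately show ?case using exact by (simp add: Suc.hyps(2)[symmetric])
qed

lemma cnt_add_edge:
  assumes "finite X" "x \<in> X" "y \<in> X" "x \<noteq> y" "\<not> F x y"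
    "\<And>a b. F a b \<Longrightarrow> F b a" "\<And>a. \<not> F a a"
  shows "cnt (add_edge F x y) X = cnt F X + 2"
proof -
  let ?G = "add_edge F x y"
  have symG: "\<And>a b. ?G a b \<Longrightarrow> ?G b a" using assms(6) unfolding add_edge_def by blast
  have irrG: "\<not> ?G x x" using assms(4,7) unfolding add_edge_def by blast
  have "cnt ?G X = cnt ?G (X - {x}) + 2 * card {u\<in>X. ?G x u}"
    using cnt_remove[of X x ?G] assms(1,2) symG irrG by blast
  moreover have "cnt F X = cnt F (X - {x}) + 2 * card {u\<in>X. F x u}"
    using cnt_remove[of X x F] assms(1,2,6,7) by blast
  moreover have "cnt ?G (X - {x}) = cnt F (X - {x})"
    unfolding cnt_def
  proof (intro sum.cong refl)
    fix a assume "a \<in> X - {x}"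
    then show "card {b\<in>X - {x}. ?G a b} = card {b\<in>X - {x}. F a b}"
      unfolding add_edge_def by (intro arg_cong[where f=card]) auto
  qed
  moreover have "{u\<in>X. ?G x u} = insert y {u\<in>X. F x u}"
    using assms(3,4) unfolding add_edge_def by auto
  moreover have "card (insert y {u\<in>X. F x u}) = Suc (card {u\<in>X. F x u})"
    using assms(1,5) by (intro card_insert_disjoint) auto
  ultimately show ?thesis by simp
qed

lemma steps_subset:
  assumes "S \<subseteq> V" shows "(conv_step V E k ^^ t) S \<subseteq> V"
  by (induction t) (use assms in \<open>auto simp: conv_step_def\<close>)

lemma conv_degenerate:
  assumes g: "graph V E" and reg: "regular V E (k + r)" and cs: "conversion_set V E k S"
  shows "degenerate (V - S) (induced E (V - S)) r"
  unfolding degenerate_def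
proof (intro allI impI)
  fix Y assume Y: "Y \<subseteq> V - S \<and> Y \<noteq> {}"
  have SV: "S \<subseteq> V" using cs unfolding conversion_set_def by blast
  obtain t where t: "(conv_step V E k ^^ t) S = V" using cs unfolding conversion_set_def by blast
  define P where "P = (\<lambda>i. (conv_step V E k ^^ i) S \<inter> Y \<noteq> {})"
  have Pt: "P t" using t Y unfolding P_def by blast
  define t0 where "t0 = (LEAST i. P i)"
  have Pt0: "P t0" unfolding t0_def using Pt by (rule LeastI)
  have "t0 \<noteq> 0" using Pt0 Y unfolding P_def by auto
  then obtain t1 where t1: "t0 = Suc t1" using not0_implies_Suc by blast
  have nP: "\<not> P t1" using t1 not_less_Least[of t1 P] unfolding t0_def by auto
  define X where "X = (conv_step V E k ^^ t1) S"
  have XV: "X \<subseteq> V" unfolding X_def using SV by (rule steps_subset)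
  have "(conv_step V E k ^^ t0) S = conv_step V E k X" unfolding X_def t1 by simp
  then obtain v where v: "v \<in> conv_step V E k X" "v \<in> Y" using Pt0 unfolding P_def by blast
  have vX: "v \<notin> X" using nP v(2) unfolding P_def X_def by blast
  then have vV: "v \<in> V" and kle: "k \<le> card {u\<in>X. E v u}" using v(1) unfolding conv_step_def by auto
  have finV: "finite V" using g unfolding graph_def by blast
  have "{u\<in>X. E v u} \<union> {u\<in>Y. E v u} \<subseteq> nbrs V E v" using XV Y unfolding nbrs_def by auto
  then have "card ({u\<in>X. E v u} \<union> {u\<in>Y. E v u}) \<le> card (nbrs V E v)"
    using finV unfolding nbrs_def by (intro card_mono) auto
  moreover have "card ({u\<in>X. E v u} \<union> {u\<in>Y. E v u}) = card {u\<in>X. E v u} + card {u\<in>Y. E v u}"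
    using nP XV Y finV unfolding P_def X_def
    by (intro card_Un_disjoint) (auto intro: finite_subset)
  moreover have "card (nbrs V E v) = k + r" using reg vV unfolding regular_def by blast
  ultimately have "card {u\<in>Y. E v u} \<le> r" using kle by linarith
  moreover have "{u\<in>Y. induced E (V - S) v u} = {u\<in>Y. E v u}"
    using Y v(2) unfolding induced_def by auto
  ultimately have "card {u\<in>Y. induced E (V - S) v u} \<le> r" by simp
  then show "\<exists>v\<in>Y. card {u\<in>Y. induced E (V - S) v u} \<le> r" using v(2) by blast
qed

lemma main_count:
  assumes g: "graph V E" and ne: "V \<noteq> {}" and rk: "r < k"
    and reg: "regular V E (k + r)" and cs: "conversion_set V E k S"
  shows "(k - r) * card V + (r + 1) * r \<le> 2 * k * card S \<and>
    (2 * k * card S = (k - r) * card V + (r + 1) * r \<longleftrightarrow>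
      independent E S \<and> maximal_degenerate (V - S) (induced E (V - S)) r)"
proof -
  define W where "W = V - S"
  define F where "F = induced E W"
  have finV: "finite V" using g unfolding graph_def by blast
  have SV: "S \<subseteq> V" using cs unfolding conversion_set_def by blast
  have finS: "finite S" using finV SV finite_subset by blast
  have finW: "finite W" unfolding W_def using finV by simp
  have symE: "\<And>a b. E a b \<Longrightarrow> E b a" using g unfolding graph_def by blast
  have irrE: "\<And>a. \<not> E a a" using g unfolding graph_def by blast
  have symF: "\<And>a b. F a b \<Longrightarrow> F b a" unfolding F_def induced_def using symE by blast
  have irrF: "\<And>a. \<not> F a a" unfolding F_def induced_def using irrE by blast
  have degW: "degenerate W F r" unfolding W_def F_def using conv_degenerate[OF g reg cs] .
  have cWF: "cnt F W = cnt E W" unfolding cnt_def F_def induced_def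
    by (intro sum.cong refl arg_cong[where f=card]) auto
  define s where "s = card S"
  define N where "N = card W"
  define cS where "cS = cnt E S"
  define cW where "cW = cnt F W"
  define B where "B = (\<Sum>a\<in>S. card {b\<in>W. E a b})"
  define g0 where "g0 = gsum r N"
  have n_eq: "card V = s + N" unfolding s_def N_def W_def using finV SV
    by (metis card_Diff_subset card_mono diff_add_inverse le_add_diff_inverse finite_subset)
  have degsplit: "\<And>a. a \<in> V \<Longrightarrow> card {b\<in>S. E a b} + card {b\<in>W. E a b} = k + r"
  proof -
    fix a assume a: "a \<in> V"
    have "{b\<in>V. E a b} = {b\<in>S. E a b} \<union> {b\<in>W. E a b}" unfolding W_def using SV by auto
    moreover have "card ({b\<in>S. E a b} \<union> {b\<in>W. E a b}) = card {b\<in>S. E a b} + card {b\<in>W. E a b}"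
      using finS finW unfolding W_def by (intro card_Un_disjoint) auto
    moreover have "card {b\<in>V. E a b} = k + r" using reg a unfolding regular_def nbrs_def by blast
    ultimately show "card {b\<in>S. E a b} + card {b\<in>W. E a b} = k + r" by simp
  qed
  have ks: "(k + r) * s = cS + B"
  proof -
    have "(k + r) * s = (\<Sum>a\<in>S. k + r)" unfolding s_def by simp
    also have "\<dots> = (\<Sum>a\<in>S. card {b\<in>S. E a b} + card {b\<in>W. E a b})"
      using degsplit SV by (intro sum.cong refl) auto
    also have "\<dots> = cS + B" unfolding cS_def B_def cnt_def by (simp add: sum.distrib)
    finally show ?thesis .
  qed
  have kN: "(k + r) * N = B + cW"
  proof -
    have "(k + r) * N = (\<Sum>a\<in>W. k + r)" unfolding N_def by simp
    also have "\<dots> = (\<Sum>a\<in>W. card {b\<in>S. E a b} + card {b\<in>W. E a b})"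
      using degsplit unfolding W_def by (intro sum.cong refl) auto
    also have "\<dots> = (\<Sum>a\<in>W. card {b\<in>S. E a b}) + cnt E W" unfolding cnt_def by (simp add: sum.distrib)
    also have "(\<Sum>a\<in>W. card {b\<in>S. E a b}) = B" unfolding B_def
      using cross_sym[OF finW finS, of E] symE by blast
    finally show ?thesis using cWF cW_def by simp
  qed
  have cWle: "cW \<le> 2 * g0" unfolding cW_def g0_def N_def using deg_bound[of W F r] finW degW symF irrF by blast
  obtain v where v: "v \<in> V" using ne by blast
  have "nbrs V E v \<subseteq> V - {v}" unfolding nbrs_def using irrE by auto
  then have "card (nbrs V E v) \<le> card (V - {v})" using finV by (intro card_mono) auto
  then have nbig: "k + r + 1 \<le> s + N" using reg v finV n_eq card_gt_0_iff[of V] ne unfolding regular_def by auto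
  have indep: "independent E S \<longleftrightarrow> cS = 0"
  proof -
    have "cS = 0 \<longleftrightarrow> (\<forall>a\<in>S. card {b\<in>S. E a b} = 0)" unfolding cS_def cnt_def using finS by simp
    also have "\<dots> \<longleftrightarrow> (\<forall>a\<in>S. {b\<in>S. E a b} = {})" using finS by simp
    also have "\<dots> \<longleftrightarrow> independent E S" unfolding independent_def by blast
    finally show ?thesis by simp
  qed
  have maxi: "maximal_degenerate W F r \<longleftrightarrow> cW = 2 * g0"
  proof
    assume "maximal_degenerate W F r"
    then show "cW = 2 * g0" unfolding cW_def g0_def N_def using maxdeg_exact[of W F r] finW symF irrF by blast
  next
    assume eq: "cW = 2 * g0"
    show "maximal_degenerate W F r" unfolding maximal_degenerate_def
    proof (intro conjI ballI impI degW notI)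
      fix x y assume xy: "x \<in> W" "y \<in> W" "x \<noteq> y \<and> \<not> F x y"
        and dg: "degenerate W (add_edge F x y) r"
      have symG: "\<And>a b. add_edge F x y a b \<Longrightarrow> add_edge F x y b a"
        using symF unfolding add_edge_def by blast
      have irrG: "\<And>a. \<not> add_edge F x y a a" using irrF xy unfolding add_edge_def by blast
      have "cnt (add_edge F x y) W \<le> 2 * gsum r (card W)" using deg_bound[of W "add_edge F x y" r] finW dg symG irrG by blast
      moreover have "cnt (add_edge F x y) W = cnt F W + 2"
        using cnt_add_edge[of W x y F] finW xy symF irrF by blast
      ultimately show False using eq unfolding cW_def g0_def N_def by simp
    qed
  qed
  have kr: "int (k - r) = int k - int r" using rk by simp
  define D where "D = int (2 * k * s) - int ((k - r) * (s + N) + (r + 1) * r)"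
  have Deq: "D = int cS + 2 * int r * int N - int r * int r - int r - int cW"
  proof -
    have a: "int (k + r) * int s = int cS + int B" using ks by (metis of_nat_add of_nat_mult)
    have b: "int (k + r) * int N = int B + int cW" using kN by (metis of_nat_add of_nat_mult)
    have e: "int ((k - r) * (s + N) + (r + 1) * r) = (int k - int r) * (int s + int N) + (int r + 1) * int r"
      by (simp only: of_nat_add of_nat_mult kr of_nat_1)
    have e2: "int (2 * k * s) = 2 * int k * int s" by simp
    have "D = 2 * int k * int s - ((int k - int r) * (int s + int N) + (int r + 1) * int r)"
      unfolding D_def e e2 ..
    then show ?thesis using a b by (simp add: algebra_simps)
  qed
  have res: "0 \<le> D \<and> (D = 0 \<longleftrightarrow> cS = 0 \<and> cW = 2 * g0)"
  proof (cases "r \<le> N")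
    case True
    have "2 * g0 + r * (r + 1) = 2 * r * N" unfolding g0_def using gsum_large[OF True] .
    then have "int (2 * g0 + r * (r + 1)) = int (2 * r * N)" by (rule arg_cong)
    then have "2 * int g0 + int r * int r + int r = 2 * int r * int N"
      by (simp add: algebra_simps)
    then show ?thesis using Deq cWle by auto
  next
    case False
    have "2 * g0 + N = N * N" unfolding g0_def using False gsum_small by simp
    then have g2: "2 * int g0 + int N = int N * int N" by (metis of_nat_add of_nat_mult of_nat_numeral)
    have a: "int (k + r) * int s = int cS + int B" using ks by (metis of_nat_add of_nat_mult)
    have b: "int (k + r) * int N = int B + int cW" using kN by (metis of_nat_add of_nat_mult)
    have s_ge: "int s \<ge> int k + int r + 1 - int N" using nbig by simp
    have m1: "(int k + int r) * int s \<ge> (int k + int r) * (int k + int r + 1 - int N)"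
      using s_ge by (intro mult_left_mono) auto
    have m2: "int k * (int k + 2 * int r + 1 - 2 * int N) \<ge> int k * 1"
      using False rk by (intro mult_left_mono) auto
    have m3: "(int r - int N) * (int r - int N) \<ge> 0" by simp
    have k1: "int k \<ge> 1" using rk by simp
    have Dpos: "D > 0"
      using a b m1 m2 Deq k1 by (simp add: algebra_simps)
    moreover have "\<not> (cS = 0 \<and> cW = 2 * g0)"
    proof
      assume "cS = 0 \<and> cW = 2 * g0"
      then have "int cW = int N * int N - int N" "int cS = 0" using g2 by auto
      then have "D < 0" using Deq m3 False by (simp add: algebra_simps)
      then show False using Dpos by simp
    qed
    ultimately show ?thesis by simp
  qed
  have r1: "0 \<le> D \<longleftrightarrow> (k - r) * (s + N) + (r + 1) * r \<le> 2 * k * s"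
    unfolding D_def by (simp only: diff_ge_0_iff_ge of_nat_le_iff)
  have r2: "D = 0 \<longleftrightarrow> 2 * k * s = (k - r) * (s + N) + (r + 1) * r"
    unfolding D_def by (simp only: eq_iff_diff_eq_0[symmetric] of_nat_eq_iff)
  have "(k - r) * card V + (r + 1) * r \<le> 2 * k * card S"
    using res r1 n_eq s_def by simp
  moreover have "2 * k * card S = (k - r) * card V + (r + 1) * r \<longleftrightarrow>
      independent E S \<and> maximal_degenerate (V - S) (induced E (V - S)) r"
    using res r2 n_eq s_def indep maxi W_def F_def by simp
  ultimately show ?thesis by blast
qed

theorem proposition4p3:
  fixes V :: "'a set" and E :: "'a \<Rightarrow> 'a \<Rightarrow> bool" and k r :: nat
  assumes "graph V E" and "V \<noteq> {}"
    and "r < k"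
    and "regular V E (k + r)"
  shows "real (conv_number V E k)
           \<ge> (real (k - r) * real (card V) + real ((r + 1) * r)) / (2 * real k)
    \<and> (\<forall>S. r \<ge> 1 \<longrightarrow> min_conversion_set V E k S \<longrightarrow>
           (real (card S) = (real (k - r) * real (card V) + real ((r + 1) * r)) / (2 * real k)
            \<longleftrightarrow> independent E S \<and> maximal_degenerate (V - S) (induced E (V - S)) r))"
proof -
  have kpos: "real k > 0" using assms(3) by simp
  have ra: "real (k - r) * real (card V) + real ((r + 1) * r) = real ((k - r) * card V + (r + 1) * r)"
    by simp
  have finV: "finite V" using assms(1) unfolding graph_def by blast
  have fin: "finite {card S |S. conversion_set V E k S}"
    by (rule finite_subset[of _ "card ` Pow V"]) (auto simp: conversion_set_def finV)
  have "conversion_set V E k V" unfolding conversion_set_def by (auto intro: exI[of _ 0])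
  then have nem: "{card S |S. conversion_set V E k S} \<noteq> {}" by blast
  have "conv_number V E k \<in> {card S |S. conversion_set V E k S}"
    unfolding conv_number_def using Min_in[OF fin nem] .
  then obtain S0 where S0': "conv_number V E k = card S0" "conversion_set V E k S0" by blast
  then have S0: "conversion_set V E k S0" "card S0 = conv_number V E k" by simp_all
  define a where "a = (k - r) * card V + (r + 1) * r"
  have k2: "2 * real k > 0" using kpos by simp
  have conv: "\<And>c. real c * (2 * real k) = real (c * (2 * k))" by simp
  have "a \<le> card S0 * (2 * k)"
    using main_count[OF assms S0(1)] unfolding a_def by (simp add: mult.commute mult.left_commute)
  then have "real a \<le> real (card S0 * (2 * k))" by (simp only: of_nat_le_iff)
  then have "real a \<le> real (card S0) * (2 * real k)" by (simp only: conv)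
  then have "real a / (2 * real k) \<le> real (card S0)" using k2 by (simp only: pos_divide_le_eq)
  then have part1: "real (conv_number V E k)
           \<ge> (real (k - r) * real (card V) + real ((r + 1) * r)) / (2 * real k)"
    using S0(2) ra unfolding a_def by simp
  have part2: "real (card S) = (real (k - r) * real (card V) + real ((r + 1) * r)) / (2 * real k)
            \<longleftrightarrow> independent E S \<and> maximal_degenerate (V - S) (induced E (V - S)) r"
    if "min_conversion_set V E k S" for S
  proof -
    have cs: "conversion_set V E k S" using that unfolding min_conversion_set_def by blast
    have "real (card S) = real a / (2 * real k) \<longleftrightarrow> real (card S) * (2 * real k) = real a"
      using k2 by (intro nonzero_eq_divide_eq) simp
    also have "\<dots> \<longleftrightarrow> card S * (2 * k) = a" by (simp only: conv of_nat_eq_iff)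
    also have "\<dots> \<longleftrightarrow> 2 * k * card S = a" by (simp only: mult.commute)
    finally have "real (card S) = real a / (2 * real k) \<longleftrightarrow> 2 * k * card S = a" .
    then show ?thesis using main_count[OF assms cs] ra unfolding a_def by simp
  qed
  show ?thesis using part1 part2 by blast
qed

end
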